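(* Let $N \ge 1$ and let $W_N$ be the set of binary words of length $N$. Define $\varphi_5 : W_N \to W_N$ by $\varphi_5(u) = v\, 1\, 0^{p+2} v'$ if $u = v 0^p 100 v'$ where $p \geq 1$, $v'$ is a (possibly empty) word, and $v$ is a (possibly empty) word which is either empty or ends with the letter $1$ and such that $v 0^p$ does not contain $0100$ as a contiguous subword; and $\varphi_5(u) = u$ otherwise. Then $|P(\varphi_5(u))| \leq |P(u)|$ for every $u \in W_N$.
   Context: For a binary word $x$, $x^j$ denotes $j$ concatenated copies of $x$, and juxtaposition denotes concatenation. For a binary word $w = w_1 \cdots w_\ell$ of length $\ell$, $P(w)$ is the set of indices $i \geq 2$ such that at least one of the following holds: (i) $\ell \geq i$ and $w_{i-1} w_i = 00$; (ii) $\ell \geq i+2$ and $w_{i-1} w_i w_{i+1} w_{i+2} = 0100$; (iii) $\ell \geq i+3$ and $w_{i-1} \cdots w_{i+3} = 01010$. *)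

theory Defs
  imports Main
begin

text \<open>Binary words are lists over the letters 0 and 1 (as naturals).
  The letter w_j (1-indexed, as in the paper) is w ! (j - 1).\<close>

definition W :: "nat \<Rightarrow> nat list set" where
  "W N = {w. length w = N \<and> set w \<subseteq> {0, 1}}"

definition letter :: "nat list \<Rightarrow> nat \<Rightarrow> nat" where
  "letter w j = w ! (j - 1)"

definition P :: "nat list \<Rightarrow> nat set" where
  "P w = {i. 2 \<le> i \<and>
     ((length w \<ge> i \<and> letter w (i-1) = 0 \<and> letter w i = 0)
    \<or> (length w \<ge> i + 2 \<and> letter w (i-1) = 0 \<and> letter w i = 1
         \<and> letter w (i+1) = 0 \<and> letter w (i+2) = 0)
    \<or> (length w \<ge> i + 3 \<and> letter w (i-1) = 0 \<and> letter w i = 1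
         \<and> letter w (i+1) = 0 \<and> letter w (i+2) = 1 \<and> letter w (i+3) = 0))}"

definition subword :: "nat list \<Rightarrow> nat list \<Rightarrow> bool" where
  "subword x w = (\<exists>a b. w = a @ x @ b)"

definition phi5_dec :: "nat list \<Rightarrow> nat list \<Rightarrow> nat \<Rightarrow> nat list \<Rightarrow> bool" where
  "phi5_dec u v p v' =
     (u = v @ replicate p 0 @ [1, 0, 0] @ v' \<and> p \<ge> 1
      \<and> (v = [] \<or> last v = 1)
      \<and> \<not> subword [0, 1, 0, 0] (v @ replicate p 0))"

definition phi5 :: "nat list \<Rightarrow> nat list" where
  "phi5 u = (if \<exists>v p v'. phi5_dec u v p v'
             then (SOME r. \<exists>v p v'. phi5_dec u v p v' \<and> r = v @ [1] @ replicate (p + 2) 0 @ v')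
             else u)"

end

theory Submission
  imports Defs
begin

lemma P_mem: "i \<in> P w \<longleftrightarrow> (\<exists>j. i = j+2 \<and> ((j+2 \<le> length w \<and> w!j=0 \<and> w!(j+1)=0)
  \<or> (j+4 \<le> length w \<and> w!j=0 \<and> w!(j+1)=1 \<and> w!(j+2)=0 \<and> w!(j+3)=0)
  \<or> (j+5 \<le> length w \<and> w!j=0 \<and> w!(j+1)=1 \<and> w!(j+2)=0 \<and> w!(j+3)=1 \<and> w!(j+4)=0)))" (is "?l = ?r")
proof
  assume "i \<in> P w"
  then show ?r unfolding P_def letter_def
    apply (intro exI[of _ "i-2"])
    apply (cases i; simp; rename_tac k; case_tac k; simp add: numeral_eq_Suc)
    done
next
  assume ?r
  then show ?l unfolding P_def letter_def
    by (auto simp add: numeral_eq_Suc)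
qed

lemma P_00: "j+2 \<le> length w \<Longrightarrow> w!j=0 \<Longrightarrow> w!(j+1)=0 \<Longrightarrow> j+2 \<in> P w"
  unfolding P_mem by blast

lemma P_0100: "j+4 \<le> length w \<Longrightarrow> w!j=0 \<Longrightarrow> w!(j+1)=1 \<Longrightarrow> w!(j+2)=0 \<Longrightarrow> w!(j+3)=0 \<Longrightarrow> j+2 \<in> P w"
  unfolding P_mem by blast

lemma P_fin: "finite (P w)"
proof -
  have "P w \<subseteq> {..length w}" by (auto simp: P_mem)
  then show ?thesis using finite_subset by blast
qed

lemma key:
  assumes len: "length F = length U" "m+p+3 \<le> length U" "p \<ge> 1"
  and Fv: "\<forall>k<m. F!k = U!k" and Fm: "F!m = 1" and Fz: "\<forall>k. m < k \<and> k \<le> m+p+2 \<longrightarrow> F!k = 0"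
  and Uz: "\<forall>k. m \<le> k \<and> k < m+p \<longrightarrow> U!k = 0" and U1: "U!(m+p) = 1"
  and U2: "U!(m+p+1)=0" and U3: "U!(m+p+2)=0"
  and tail: "\<forall>k. m+p+3 \<le> k \<longrightarrow> F!k = U!k"
  and lst: "m \<ge> 1 \<Longrightarrow> U!(m-1) = 1"
  shows "card (P F) \<le> card (P U)"
proof -
  define g where "g i = (if m+3 \<le> i \<and> i \<le> m+p+2 then i-1 else (i::nat))" for i
  have notm2: "m+2 \<notin> P F" using Fm by (auto simp: P_mem)
  have img: "g i \<in> P U" if iP: "i \<in> P F" for i
  proof -
    obtain j where ij: "i = j+2" and pat: "(j+2 \<le> length F \<and> F!j=0 \<and> F!(j+1)=0)
  \<or> (j+4 \<le> length F \<and> F!j=0 \<and> F!(j+1)=1 \<and> F!(j+2)=0 \<and> F!(j+3)=0)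
  \<or> (j+5 \<le> length F \<and> F!j=0 \<and> F!(j+1)=1 \<and> F!(j+2)=0 \<and> F!(j+3)=1 \<and> F!(j+4)=0)"
      using iP by (auto simp: P_mem)
    consider "j+1 \<le> m" | "j = m" | "m+1 \<le> j \<and> j < m+p" | "j = m+p" | "m+p+1 \<le> j" by linarith
    then show ?thesis
    proof cases
      case 1
      then have gi: "g i = i" using ij g_def by simp
      have m1: "m \<ge> 1" using 1 by simp
      have Fl: "F!(m-1) = 1" using lst[OF m1] Fv m1 by simp
      have Fm1: "F!(m+1) = 0" using Fz by simp
      consider "j+4 < m" | "j+4 = m" | "j+3 = m" | "j+2 = m" | "j+1 = m" using 1 by linarith
      then have "i \<in> P U"
      proof cases
        case 1
        then have "F!j = U!j" "F!(j+1) = U!(j+1)" "F!(j+2) = U!(j+2)" "F!(j+3) = U!(j+3)" "F!(j+4) = U!(j+4)"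
          using Fv by simp_all
        then show ?thesis using pat len ij unfolding P_mem by auto
      next
        case 2
        then have e: "j+3 = m-1" "j+4 = m" by arith+
        then have "F!(j+3) = 1" "F!(j+4) = 1" "F!j = U!j" "F!(j+1) = U!(j+1)" using Fl Fm Fv by simp_all
        then show ?thesis using pat len ij unfolding P_mem by auto
      next
        case 3
        then have "F!(j+2) = 1" "F!j = U!j" "F!(j+1) = U!(j+1)" using Fl Fv by auto
        then show ?thesis using pat len ij unfolding P_mem by auto
      next
        case 4
        then have "F!(j+1) = 1" "F!(j+2) = 1" using Fl Fm by auto
        then show ?thesis using pat by auto
      next
        case 5
        then have "F!j = 1" using Fl by auto
        then show ?thesis using pat by auto
      qed
      then show ?thesis using gi by simp
    next
      case 2
      then show ?thesis using pat Fm by auto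
    next
      case 3
      then have gi: "g i = j+1" using ij g_def by simp
      have "m \<le> j-1" "j-1 < m+p" "m \<le> j" "j < m+p" using 3 by arith+
      then have "U!(j-1) = 0" "U!j = 0" using Uz by blast+
      moreover have "j - 1 + 2 \<le> length U" using 3 len by simp
      ultimately have "(j-1)+2 \<in> P U" using P_00[of "j-1" U] 3 by simp
      then show ?thesis using gi 3 by (simp add: numeral_eq_Suc)
    next
      case 4
      then have gi: "g i = j+1" using ij g_def len by simp
      define t where "t = j - 1"
      have t: "j = t + 1" using 4 len t_def by simp
      have tt: "t+1 = m+p" "t+2 = m+p+1" "t+3 = m+p+2" "m \<le> t" "t < m+p" using 4 t len by auto
      have "U!t = 0" using Uz[rule_format, of t] tt by simp
      moreover have "U!(t+1) = 1" "U!(t+2) = 0" "U!(t+3) = 0" using U1 U2 U3 by (simp_all only: tt(1-3))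
      moreover have "t+4 \<le> length U" using tt len by simp
      ultimately have "t+2 \<in> P U" by (intro P_0100)
      then show ?thesis using gi t by (simp add: numeral_eq_Suc)
    next
      case 5
      then have gi: "g i = i" using ij g_def by simp
      have eq: "\<forall>k\<ge>m+p+1. F!k = U!k"
      proof (intro allI impI)
        fix k assume "k \<ge> m+p+1"
        then consider "k = m+p+1" | "k = m+p+2" | "k \<ge> m+p+3" by linarith
        then show "F!k = U!k" using Fz U2 U3 tail by cases auto
      qed
      have "F!j = U!j" "F!(j+1) = U!(j+1)" "F!(j+2) = U!(j+2)" "F!(j+3) = U!(j+3)" "F!(j+4) = U!(j+4)"
        using eq 5 by auto
      then have "i \<in> P U" using pat len ij unfolding P_mem by auto
      then show ?thesis using gi by simp
    qed
  qed
  have "inj_on g (P F)"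
  proof
    fix x y assume "x \<in> P F" "y \<in> P F" "g x = g y"
    then have "x \<noteq> m+2" "y \<noteq> m+2" "g x = g y" using notm2 by auto
    then show "x = y" unfolding g_def by (auto split: if_splits)
  qed
  then show ?thesis using img P_fin by (intro card_inj_on_le) auto
qed

lemma conc:
  assumes d: "phi5_dec u v p v'"
  shows "card (P (v @ [1] @ replicate (p + 2) 0 @ v')) \<le> card (P u)"
proof -
  define m where "m = length v"
  have u: "u = v @ replicate p 0 @ [1, 0, 0] @ v'" and p: "p \<ge> 1" and l: "v = [] \<or> last v = 1"
    using d unfolding phi5_dec_def by auto
  let ?F = "v @ [1] @ replicate (p + 2) 0 @ v'"
  show ?thesis
  proof (rule key[where m=m and p=p])
    show "length ?F = length u" using u by simp
    show "m+p+3 \<le> length u" using u m_def by simp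
    show "p \<ge> 1" by fact
    show "\<forall>k<m. ?F!k = u!k" using u m_def by (auto simp: nth_append)
    show "?F!m = 1" using m_def by (simp add: nth_append)
    show "\<forall>k. m < k \<and> k \<le> m+p+2 \<longrightarrow> ?F!k = 0"
    proof (intro allI impI)
      fix k assume k: "m < k \<and> k \<le> m+p+2"
      define d where "d = k - m - 1"
      have kd: "k = m + Suc d" "d < p+2" using k d_def by arith+
      have "?F!k = (replicate (p + 2) 0 @ v') ! d" using kd m_def by (simp only: nth_append_length_plus append.simps nth_Cons_Suc)
      also have "\<dots> = replicate (p + 2) 0 ! d" using kd(2) by (intro nth_append_left) simp
      also have "\<dots> = 0" using kd(2) by (rule nth_replicate)
      finally show "?F!k = 0" .
    qed
    show "\<forall>k. m \<le> k \<and> k < m+p \<longrightarrow> u!k = 0"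
    proof (intro allI impI)
      fix k assume k: "m \<le> k \<and> k < m+p"
      define d where "d = k - m"
      have kd: "k = m + d" "d < p" using k d_def by arith+
      then show "u!k = 0" using u m_def by (simp add: nth_append)
    qed
    show "u!(m+p) = 1" "u!(m+p+1) = 0" "u!(m+p+2) = 0" using u m_def by (auto simp: nth_append)
    show "\<forall>k. m+p+3 \<le> k \<longrightarrow> ?F!k = u!k"
    proof (intro allI impI)
      fix k assume k: "m+p+3 \<le> k"
      define d where "d = k - (m + p + 3)"
      have kd: "k = m + p + 3 + d" using k d_def by arith
      have "?F!k = v'!d" using m_def kd by (simp add: nth_append)
      moreover have "u!k = v'!d" using u m_def kd by (simp add: nth_append)
      ultimately show "?F!k = u!k" by simp
    qed
    show "u!(m-1) = 1" if "m \<ge> 1"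
    proof -
      have "v \<noteq> []" using that m_def by auto
      then have "v!(m-1) = 1" using l m_def by (simp add: last_conv_nth)
      then show ?thesis using u m_def that by (auto simp: nth_append)
    qed
  qed
qed

theorem lemma4p5:
  fixes N :: nat and u :: "nat list"
  assumes "N \<ge> 1" and "u \<in> W N"
  shows "card (P (phi5 u)) \<le> card (P u)"
proof (cases "\<exists>v p v'. phi5_dec u v p v'")
  case False
  have "phi5 u = u" unfolding phi5_def by (rule if_not_P[OF False])
  then show ?thesis by (rule ssubst) (rule order_refl)
next
  case True
  let ?Q = "\<lambda>r. \<exists>v p v'. phi5_dec u v p v' \<and> r = v @ [1] @ replicate (p + 2) 0 @ v'"
  from True obtain v0 p0 v0' where d0: "phi5_dec u v0 p0 v0'" by (elim exE)
  have "?Q (v0 @ [1] @ replicate (p0 + 2) 0 @ v0')" using d0 by (intro exI conjI) (rule d0, rule refl)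
  then have "?Q (SOME r. ?Q r)" by (rule someI)
  then obtain v p v' where d: "phi5_dec u v p v'"
    and e0: "(SOME r. ?Q r) = v @ [1] @ replicate (p + 2) 0 @ v'"
    by (elim exE conjE)
  have "phi5 u = (SOME r. ?Q r)" unfolding phi5_def by (rule if_P[OF True])
  then have e: "phi5 u = v @ [1] @ replicate (p + 2) 0 @ v'" using e0 by (rule trans)
  show ?thesis unfolding e by (rule conc[OF d])
qed

end
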